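(* Let $G=(V,E)$ be a simple undirected connected graph modeling a radio network, and let $F$ be a finite set of tours in $G$, each of which consists of a single link (i.e., each packet must be forwarded exactly once, from the tail to the head of its link), with all packets available at their source nodes from the start. Then the minimum number of rounds of a transmission schedule that delivers every packet of $F$ to its destination equals the chromatic number of the conflict graph of $F$.
   Context: Radio network model: a network is a simple undirected connected graph $G=(V,E)$; an oriented edge $(u,v)$ is a link $u\rightarrow v$ with tail $u$ and head $v$. Computation proceeds in synchronous rounds; in each round each node either transmits a message or listens. A node $v$ hears a message from its neighbor $u$ in round $t$ iff $v$ listens in round $t$ and $u$ is the only neighbor of $v$ transmitting in round $t$. A tour consists of a packet, its injection round, and a simple oriented path $\langle v_1,\dots,v_k\rangle$ it must traverse; its links are $v_i\rightarrow v_{i+1}$, its source is $v_1$ and its destination is $v_k$. The packet is routed along the tour when there are rounds $t_1<\dots<t_{k-1}$ (not earlier than the injection round) such that $v_i$ transmits the packet in round $t_i$ and $v_{i+1}$ hears it in round $t_i$. Conflicts: a node $w$ conflicts with a link $u\rightarrow v$ if $w=u$, or $w=v$, or $w$ and $v$ are neighbors; a node conflicts with a tour if it conflicts with some link of the tour. Two tours $f_0,f_1$ conflict if either they pass through a common node, or some node of one tour $f_i$ other than $f_i$'s destination conflicts with the other tour $f_{1-i}$. The conflict graph of a set $F$ of tours is the simple graph whose vertices are the tours in $F$, two distinct tours being adjacent iff they conflict. The chromatic number of a graph is the minimum number of colors in a proper vertex coloring. *)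

theory Defs
  imports Main
begin

definition simple_graph :: "'v set \<Rightarrow> ('v \<Rightarrow> 'v \<Rightarrow> bool) \<Rightarrow> bool" where
  "simple_graph V E \<longleftrightarrow> finite V \<and> (\<forall>u v. E u v \<longrightarrow> u \<in> V \<and> v \<in> V)
     \<and> (\<forall>u v. E u v \<longrightarrow> E v u) \<and> (\<forall>u. \<not> E u u)"

definition connected_graph :: "'v set \<Rightarrow> ('v \<Rightarrow> 'v \<Rightarrow> bool) \<Rightarrow> bool" where
  "connected_graph V E \<longleftrightarrow> V \<noteq> {} \<and> (\<forall>u\<in>V. \<forall>v\<in>V. E\<^sup>*\<^sup>* u v)"

text \<open>A schedule assigns to each round t and node v either None (v listens)
or Some p (v transmits packet p).\<close>

type_synonym ('v,'p) schedule = "nat \<Rightarrow> 'v \<Rightarrow> 'p option"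

definition hears :: "('v \<Rightarrow> 'v \<Rightarrow> bool) \<Rightarrow> ('v,'p) schedule \<Rightarrow> nat \<Rightarrow> 'v \<Rightarrow> 'v \<Rightarrow> bool" where
  "hears E s t u v \<longleftrightarrow> E u v \<and> s t v = None \<and> s t u \<noteq> None
     \<and> (\<forall>w. E w v \<and> s t w \<noteq> None \<longrightarrow> w = u)"

definition routes_all ::
  "('v \<Rightarrow> 'v \<Rightarrow> bool) \<Rightarrow> ('p \<Rightarrow> 'v) \<Rightarrow> ('p \<Rightarrow> 'v) \<Rightarrow> 'p set \<Rightarrow> ('v,'p) schedule \<Rightarrow> nat \<Rightarrow> bool" where
  "routes_all E src dst F s T \<longleftrightarrow>
     (\<forall>p\<in>F. \<exists>t<T. s t (src p) = Some p \<and> hears E s t (src p) (dst p))"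

definition min_schedule_length ::
  "('v \<Rightarrow> 'v \<Rightarrow> bool) \<Rightarrow> ('p \<Rightarrow> 'v) \<Rightarrow> ('p \<Rightarrow> 'v) \<Rightarrow> 'p set \<Rightarrow> nat" where
  "min_schedule_length E src dst F = (LEAST T. \<exists>s. routes_all E src dst F s T)"

definition node_conflicts_link :: "('v \<Rightarrow> 'v \<Rightarrow> bool) \<Rightarrow> 'v \<Rightarrow> 'v \<Rightarrow> 'v \<Rightarrow> bool" where
  "node_conflicts_link E w u v \<longleftrightarrow> w = u \<or> w = v \<or> E w v"

text \<open>Conflict of two single-link tours p, q. The nodes of tour p are src p, dst p;
the only node other than the destination is src p.\<close>
definition tours_conflict ::
  "('v \<Rightarrow> 'v \<Rightarrow> bool) \<Rightarrow> ('p \<Rightarrow> 'v) \<Rightarrow> ('p \<Rightarrow> 'v) \<Rightarrow> 'p \<Rightarrow> 'p \<Rightarrow> bool" where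
  "tours_conflict E src dst p q \<longleftrightarrow>
     {src p, dst p} \<inter> {src q, dst q} \<noteq> {}
     \<or> node_conflicts_link E (src p) (src q) (dst q)
     \<or> node_conflicts_link E (src q) (src p) (dst p)"

definition chromatic_number :: "'a set \<Rightarrow> ('a \<Rightarrow> 'a \<Rightarrow> bool) \<Rightarrow> nat" where
  "chromatic_number S adj = (LEAST k. \<exists>c :: 'a \<Rightarrow> nat.
      (\<forall>x\<in>S. c x < k) \<and> (\<forall>x\<in>S. \<forall>y\<in>S. x \<noteq> y \<and> adj x y \<longrightarrow> c x \<noteq> c y))"

end

theory Submission
  imports Defs
begin

lemma dirA:
  assumes r: "routes_all E src dst F s T"
  shows "\<exists>c :: 'p \<Rightarrow> nat. (\<forall>x\<in>F. c x < T) \<and>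
     (\<forall>x\<in>F. \<forall>y\<in>F. x \<noteq> y \<and> tours_conflict E src dst x y \<longrightarrow> c x \<noteq> c y)"
proof -
  define c where "c p = (SOME t. t<T \<and> s t (src p) = Some p \<and> hears E s t (src p) (dst p))" for p
  have c: "c p < T \<and> s (c p) (src p) = Some p \<and> hears E s (c p) (src p) (dst p)" if "p \<in> F" for p
  proof -
    have "\<exists>t. t<T \<and> s t (src p) = Some p \<and> hears E s t (src p) (dst p)"
      using r that unfolding routes_all_def by blast
    from someI_ex[OF this] show ?thesis unfolding c_def .
  qed
  show ?thesis
  proof (intro exI conjI ballI impI)
    fix x assume "x \<in> F" then show "c x < T" using c by blast
  next
    fix x y assume xy: "x \<in> F" "y \<in> F" "x \<noteq> y \<and> tours_conflict E src dst x y"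
    show "c x \<noteq> c y"
    proof
      assume eq: "c x = c y"
      have cx: "s (c x) (src x) = Some x" "hears E s (c x) (src x) (dst x)" using c xy(1) by auto
      have cy: "s (c x) (src y) = Some y" "hears E s (c x) (src y) (dst y)" using c xy(2) eq by auto
      have hx: "\<forall>w. E w (dst x) \<and> s (c x) w \<noteq> None \<longrightarrow> w = src x"
        "s (c x) (dst x) = None" "E (src x) (dst x)" using cx(2) unfolding hears_def by auto
      have hy: "\<forall>w. E w (dst y) \<and> s (c x) w \<noteq> None \<longrightarrow> w = src y"
        "s (c x) (dst y) = None" "E (src y) (dst y)" using cy(2) unfolding hears_def by auto
      have d1: "src x \<noteq> src y" using cx(1) cy(1) xy(3) by auto
      have d2: "dst x \<noteq> src y" using cy(1) hx(2) by auto
      have d3: "dst y \<noteq> src x" using cx(1) hy(2) by auto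
      have d4: "\<not> E (src y) (dst x)" using hx(1) cy(1) d1 by auto
      have d5: "\<not> E (src x) (dst y)" using hy(1) cx(1) d1 by auto
      have d6: "dst x \<noteq> dst y" using d4 hy(3) by auto
      show False using xy(3) d1 d2 d3 d4 d5 d6
        unfolding tours_conflict_def node_conflicts_link_def by auto
    qed
  qed
qed

lemma dirB:
  fixes E :: "'v \<Rightarrow> 'v \<Rightarrow> bool" and F :: "'p set" and src dst :: "'p \<Rightarrow> 'v"
    and c :: "'p \<Rightarrow> nat" and k :: nat
  assumes irr: "\<forall>u. \<not> E u u" and edges: "\<forall>p\<in>F. E (src p) (dst p)"
    and col: "(\<forall>x\<in>F. c x < k) \<and>
     (\<forall>x\<in>F. \<forall>y\<in>F. x \<noteq> y \<and> tours_conflict E src dst x y \<longrightarrow> c x \<noteq> c y)"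
  shows "\<exists>s. routes_all E src dst F s k"
proof -
  define s :: "nat \<Rightarrow> 'v \<Rightarrow> 'p option" where "s t v = (if \<exists>p\<in>F. c p = t \<and> src p = v
      then Some (SOME p. p\<in>F \<and> c p = t \<and> src p = v) else None)" for t v
  have uniq: "p = q" if "p \<in> F" "q \<in> F" "c p = c q" "src p = src q" for p q
  proof (rule ccontr)
    assume "p \<noteq> q"
    moreover have "tours_conflict E src dst p q" using that unfolding tours_conflict_def by auto
    ultimately show False using col that by blast
  qed
  have sp: "s (c p) (src p) = Some p" if "p \<in> F" for p
  proof -
    have "(SOME q. q\<in>F \<and> c q = c p \<and> src q = src p) \<in> F \<and>
      c (SOME q. q\<in>F \<and> c q = c p \<and> src q = src p) = c p \<and>
      src (SOME q. q\<in>F \<and> c q = c p \<and> src q = src p) = src p"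
      using someI[where x=p and P="\<lambda>q. q\<in>F \<and> c q = c p \<and> src q = src p"] that by blast
    then show ?thesis using that uniq unfolding s_def by auto
  qed
  have sw: "\<exists>q\<in>F. c q = t \<and> src q = w" if "s t w \<noteq> None" for t w
    using that unfolding s_def by (auto split: if_splits)
  have R: "routes_all E src dst F s k"
    unfolding routes_all_def
  proof (intro ballI)
    fix p assume p: "p \<in> F"
    have h1: "c p < k" using col p by auto
    have h2: "s (c p) (src p) = Some p" using sp p .
    have "hears E s (c p) (src p) (dst p)"
      unfolding hears_def
    proof (intro conjI allI impI)
      show "E (src p) (dst p)" using edges p by auto
      show "s (c p) (src p) \<noteq> None" using sp p by auto
      show "s (c p) (dst p) = None"
      proof (rule ccontr)
        assume "s (c p) (dst p) \<noteq> None"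
        then obtain q where q: "q \<in> F" "c q = c p" "src q = dst p" using sw by blast
        have "q \<noteq> p"
        proof
          assume "q = p"
          then have "E (dst p) (dst p)" using edges p q(3) by auto
          then show False using irr by blast
        qed
        moreover have "tours_conflict E src dst p q" using q unfolding tours_conflict_def by auto
        ultimately have pq: "p \<noteq> q \<and> tours_conflict E src dst p q" by auto
        have "c p \<noteq> c q" using conjunct2[OF col] p q(1) pq by blast
        then show False using q(2) by simp
      qed
      fix w assume w: "E w (dst p) \<and> s (c p) w \<noteq> None"
      then obtain q where q: "q \<in> F" "c q = c p" "src q = w" using sw by blast
      show "w = src p"
      proof (rule ccontr)
        assume "w \<noteq> src p"
        then have "q \<noteq> p" using q by auto
        moreover have "tours_conflict E src dst p q" using q w
          unfolding tours_conflict_def node_conflicts_link_def by auto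
        ultimately have pq: "p \<noteq> q \<and> tours_conflict E src dst p q" by auto
        have "c p \<noteq> c q" using conjunct2[OF col] p q(1) pq by blast
        then show False using q(2) by simp
      qed
    qed
    then show "\<exists>t<k. s t (src p) = Some p \<and> hears E s t (src p) (dst p)" using h1 h2 by blast
  qed
  show ?thesis by (rule exI[where x=s], rule R)
qed

theorem theorem1:
  fixes V :: "'v set" and E :: "'v \<Rightarrow> 'v \<Rightarrow> bool"
    and F :: "'p set" and src dst :: "'p \<Rightarrow> 'v"
  assumes "simple_graph V E" and "connected_graph V E"
    and "finite F"
    and "\<forall>p\<in>F. E (src p) (dst p)"
  shows "min_schedule_length E src dst F = chromatic_number F (tours_conflict E src dst)"
proof -
  have irr: "\<forall>u. \<not> E u u" using assms(1) unfolding simple_graph_def by auto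
  have "(\<lambda>T. \<exists>s. routes_all E src dst F s T) = (\<lambda>k. \<exists>c :: 'p \<Rightarrow> nat.
      (\<forall>x\<in>F. c x < k) \<and> (\<forall>x\<in>F. \<forall>y\<in>F. x \<noteq> y \<and> tours_conflict E src dst x y \<longrightarrow> c x \<noteq> c y))"
  proof (intro ext iffI)
    fix T assume "\<exists>s. routes_all E src dst F s T"
    then obtain s where "routes_all E src dst F s T" by blast
    from dirA[OF this] show "\<exists>c :: 'p \<Rightarrow> nat.
      (\<forall>x\<in>F. c x < T) \<and> (\<forall>x\<in>F. \<forall>y\<in>F. x \<noteq> y \<and> tours_conflict E src dst x y \<longrightarrow> c x \<noteq> c y)" .
  next
    fix T assume "\<exists>c :: 'p \<Rightarrow> nat.
      (\<forall>x\<in>F. c x < T) \<and> (\<forall>x\<in>F. \<forall>y\<in>F. x \<noteq> y \<and> tours_conflict E src dst x y \<longrightarrow> c x \<noteq> c y)"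
    then obtain c :: "'p \<Rightarrow> nat" where "(\<forall>x\<in>F. c x < T) \<and> (\<forall>x\<in>F. \<forall>y\<in>F. x \<noteq> y \<and> tours_conflict E src dst x y \<longrightarrow> c x \<noteq> c y)" by blast
    from dirB[OF irr assms(4) this] show "\<exists>s. routes_all E src dst F s T" .
  qed
  then show ?thesis unfolding min_schedule_length_def chromatic_number_def by simp
qed

end
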